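(* For every $n \geq 2$, every $p=(p_1,\ldots,p_n) \in (0,1)^n$ with $p_1 + \cdots + p_n \leq 1$ and every integer $k \geq 0$, $$\Pr\{T_{2,n}(p) > k\} \geq \Pr\{T_{2,n}(v) > k\} \geq \Pr\{T_{2,n}(u) > k\},$$ where $p_0 = 1 - (p_1 + \cdots + p_n)$, $v=(v_1,\ldots,v_n)$ with $v_i = (1-p_0)/n$, and $u=(1/n,\ldots,1/n)$.
   Context: For a vector $q=(q_1,\ldots,q_n)$ of nonnegative reals with $q_1+\cdots+q_n\le 1$, let $q_0 = 1-(q_1+\cdots+q_n)$; coupons are drawn independently, one at each time $1,2,\ldots$, from $\{0,1,\ldots,n\}$, coupon $i$ with probability $q_i$, and coupon $0$ never belongs to the collection. $T_{2,n}(q)$ is the number of draws needed until 2 distinct coupons among $\{1,\ldots,n\}$ have first been drawn. Convention: $0^0=1$. *)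

theory Defs
  imports "HOL-Probability.Probability"
begin

text \<open>Coupon distribution on {0,1,...,n}: coupon i (1 \<le> i \<le> n) has probability q i,
  coupon 0 has probability q_0 = 1 - (q 1 + ... + q n). Meaningful when
  q i \<ge> 0 and the sum is \<le> 1.\<close>
definition coupon_pmf :: "nat \<Rightarrow> (nat \<Rightarrow> real) \<Rightarrow> nat pmf" where
  "coupon_pmf n q = embed_pmf (\<lambda>i. if i = 0 then 1 - (\<Sum>j=1..n. q j)
                                    else if i \<in> {1..n} then q i else 0)"

text \<open>T_{2,n} on a stream of draws (draw at time t is the (t-1)-th stream element):
  number of draws until 2 distinct coupons among {1..n} have been drawn (\<infinity> if never).\<close>
definition T2 :: "nat \<Rightarrow> nat stream \<Rightarrow> enat" where
  "T2 n \<omega> = (if \<exists>t. card (set (stake t \<omega>) \<inter> {1..n}) \<ge> 2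
             then enat (LEAST t. card (set (stake t \<omega>) \<inter> {1..n}) \<ge> 2) else \<infinity>)"

definition T2_tail :: "nat \<Rightarrow> (nat \<Rightarrow> real) \<Rightarrow> nat \<Rightarrow> real" where
  "T2_tail n q k = measure (stream_space (measure_pmf (coupon_pmf n q)))
      {\<omega> \<in> space (stream_space (measure_pmf (coupon_pmf n q))). T2 n \<omega> > enat k}"

end

theory Submission
  imports Defs
begin



lemma pmf_coupon:
  fixes q :: "nat \<Rightarrow> real"
  assumes nn: "\<forall>i\<in>{1..n}. 0 \<le> q i" and s: "(\<Sum>i=1..n. q i) \<le> 1"
  shows "pmf (coupon_pmf n q) i = (if i = 0 then 1 - (\<Sum>j=1..n. q j) else if i \<in> {1..n} then q i else 0)"
  unfolding coupon_pmf_def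
proof (rule pmf_embed_pmf)
  show "\<And>x. 0 \<le> (if x = 0 then 1 - (\<Sum>j=1..n. q j) else if x \<in> {1..n} then q x else 0)"
    using nn s by auto
  have "(\<integral>\<^sup>+ x. ennreal (if x = 0 then 1 - (\<Sum>j=1..n. q j) else if x \<in> {1..n} then q x else 0) \<partial>count_space UNIV)
     = (\<Sum>x\<in>{0..n}. ennreal (if x = 0 then 1 - (\<Sum>j=1..n. q j) else if x \<in> {1..n} then q x else 0))"
    by (rule nn_integral_count_space') auto
  also have "\<dots> = ennreal (\<Sum>x\<in>{0..n}. (if x = 0 then 1 - (\<Sum>j=1..n. q j) else if x \<in> {1..n} then q x else 0))"
    using nn s by (intro sum_ennreal) auto
  also have "(\<Sum>x\<in>{0..n}. (if x = 0 then 1 - (\<Sum>j=1..n. q j) else if x \<in> {1..n} then q x else 0)) = 1"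
  proof -
    have "{0..n} = insert 0 {1..n}" by auto
    then have "(\<Sum>x\<in>{0..n}. (if x = 0 then 1 - (\<Sum>j=1..n. q j) else if x \<in> {1..n} then q x else 0))
      = (1 - (\<Sum>j=1..n. q j)) + (\<Sum>x\<in>{1..n}. (if x = 0 then 1 - (\<Sum>j=1..n. q j) else if x \<in> {1..n} then q x else 0))"
      by simp
    also have "(\<Sum>x\<in>{1..n}. (if x = 0 then 1 - (\<Sum>j=1..n. q j) else if x \<in> {1..n} then q x else 0)) = (\<Sum>j=1..n. q j)"
      by (rule sum.cong) auto
    finally show ?thesis by simp
  qed
  finally show "(\<integral>\<^sup>+ x. ennreal (if x = 0 then 1 - (\<Sum>j=1..n. q j) else if x \<in> {1..n} then q x else 0) \<partial>count_space UNIV) = 1" by simp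
qed

lemma prob_compl:
  fixes q :: "nat \<Rightarrow> real"
  assumes nn: "\<forall>i\<in>{1..n}. 0 \<le> q i" and s: "(\<Sum>i=1..n. q i) \<le> 1" and S: "S \<subseteq> {1..n}"
  shows "measure (measure_pmf (coupon_pmf n q)) (- S) = 1 - (\<Sum>i\<in>S. q i)"
proof -
  have fin: "finite S" using S finite_subset by blast
  have "measure (measure_pmf (coupon_pmf n q)) (- S) = 1 - measure (measure_pmf (coupon_pmf n q)) S"
    using measure_pmf.prob_compl[of S "coupon_pmf n q"] by (simp add: Compl_eq_Diff_UNIV)
  also have "measure (measure_pmf (coupon_pmf n q)) S = (\<Sum>i\<in>S. q i)"
    using fin S by (auto simp add: measure_measure_pmf_finite pmf_coupon[OF nn s] subset_iff intro!: sum.cong)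
  finally show ?thesis .
qed

lemma meas1: "Measurable.pred (stream_space (measure_pmf D)) (\<lambda>\<omega>. \<omega> !! i \<in> A)"
proof -
  have "(\<lambda>\<omega>. \<omega> !! i) \<in> measurable (stream_space (measure_pmf D)) (measure_pmf D)" by (rule measurable_snth)
  moreover have "(\<lambda>x. x \<in> A) \<in> measurable (measure_pmf D) (count_space UNIV)" by simp
  ultimately show ?thesis by (rule measurable_compose[where f="\<lambda>\<omega>. \<omega> !! i" and g="\<lambda>x. x \<in> A", simplified o_def])
qed
lemma meas_all:
  "Measurable.pred (stream_space (measure_pmf D)) (\<lambda>\<omega>. \<forall>i\<in>{..<k}. \<omega> !! i \<in> A)"
  by (rule pred_intros_finite(3)) (auto intro: meas1)
lemma meas_set:
  "{\<omega>\<in>space (stream_space (measure_pmf D)). \<forall>i<k. \<omega> !! i \<in> A} \<in> sets (stream_space (measure_pmf D))"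
  using meas_all[where D=D and k=k and A=A] unfolding pred_def Ball_def lessThan_iff .

lemma stream_all_in:
  fixes D :: "'a pmf"
  shows "emeasure (stream_space (measure_pmf D)) {\<omega>\<in>space (stream_space (measure_pmf D)). \<forall>i<k. \<omega> !! i \<in> A}
    = (emeasure (measure_pmf D) A) ^ k"
proof (induction k)
  case 0
  then show ?case
    using prob_space.prob_space_stream_space[OF measure_pmf.prob_space_axioms, of D]
    by (simp add: prob_space.emeasure_space_1)
next
  case (Suc k)
  have sp: "space (stream_space (measure_pmf D)) = UNIV" by (simp add: space_stream_space)
  have "emeasure (stream_space (measure_pmf D)) {\<omega>\<in>space (stream_space (measure_pmf D)). \<forall>i<Suc k. \<omega> !! i \<in> A}
    = (\<integral>\<^sup>+t. emeasure (stream_space (measure_pmf D)) {x\<in>space (stream_space (measure_pmf D)). t ## x \<in> {\<omega>\<in>space (stream_space (measure_pmf D)). \<forall>i<Suc k. \<omega> !! i \<in> A}} \<partial>measure_pmf D)"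
    by (rule prob_space.emeasure_stream_space[OF measure_pmf.prob_space_axioms]) (rule meas_set)
  also have "\<dots> = (\<integral>\<^sup>+t. indicator A t * emeasure (stream_space (measure_pmf D)) {\<omega>\<in>space (stream_space (measure_pmf D)). \<forall>i<k. \<omega> !! i \<in> A} \<partial>measure_pmf D)"
  proof (rule nn_integral_cong)
    fix t
    have "{x\<in>space (stream_space (measure_pmf D)). t ## x \<in> {\<omega>\<in>space (stream_space (measure_pmf D)). \<forall>i<Suc k. \<omega> !! i \<in> A}}
       = (if t \<in> A then {\<omega>\<in>space (stream_space (measure_pmf D)). \<forall>i<k. \<omega> !! i \<in> A} else {})"
      using sp by (cases "t \<in> A") (simp_all add: All_less_Suc2)
    then show "emeasure (stream_space (measure_pmf D)) {x\<in>space (stream_space (measure_pmf D)). t ## x \<in> {\<omega>\<in>space (stream_space (measure_pmf D)). \<forall>i<Suc k. \<omega> !! i \<in> A}}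
      = indicator A t * emeasure (stream_space (measure_pmf D)) {\<omega>\<in>space (stream_space (measure_pmf D)). \<forall>i<k. \<omega> !! i \<in> A}"
      by (simp split: split_indicator)
  qed
  also have "\<dots> = emeasure (measure_pmf D) A * emeasure (stream_space (measure_pmf D)) {\<omega>\<in>space (stream_space (measure_pmf D)). \<forall>i<k. \<omega> !! i \<in> A}"
    by (simp add: nn_integral_multc)
  finally show ?case using Suc by simp
qed




lemma stream_all_in_measure:
  fixes D :: "'a pmf"
  shows "measure (stream_space (measure_pmf D)) {\<omega>\<in>space (stream_space (measure_pmf D)). \<forall>i<k. \<omega> !! i \<in> A}
    = (measure (measure_pmf D) A) ^ k"
proof -
  have "measure (stream_space (measure_pmf D)) {\<omega>\<in>space (stream_space (measure_pmf D)). \<forall>i<k. \<omega> !! i \<in> A}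
     = enn2real ((emeasure (measure_pmf D) A)^k)" by (simp only: measure_def stream_all_in)
  also have "\<dots> = enn2real (ennreal (measure (measure_pmf D) A) ^ k)" by (simp only: measure_pmf.emeasure_eq_measure)
  also have "\<dots> = measure (measure_pmf D) A ^ k" by (simp add: ennreal_power)
  finally show ?thesis .
qed

lemma set_stake_eq: "set (stake k \<omega>) = (\<lambda>i. \<omega> !! i) ` {..<k}"
  by (force simp: set_conv_nth)

lemma all_less_iff_set: "(\<forall>i<k. \<omega> !! i \<in> B) \<longleftrightarrow> set (stake k \<omega>) \<subseteq> B"
  by (auto simp: set_stake_eq)

lemma T2_gt_iff: "T2 n \<omega> > enat k \<longleftrightarrow> card (set (stake k \<omega>) \<inter> {1..n}) \<le> 1"
proof -
  define P where "P t = (card (set (stake t \<omega>) \<inter> {1..n}) \<ge> 2)" for t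
  have mono: "P t \<Longrightarrow> t \<le> t' \<Longrightarrow> P t'" for t t'
  proof -
    assume "P t" "t \<le> t'"
    then obtain d where d: "t' = t + d" using le_Suc_ex by blast
    have "set (stake t \<omega>) \<subseteq> set (stake t' \<omega>)"
      unfolding d by (metis stake_add set_append Un_upper1)
    then have "card (set (stake t \<omega>) \<inter> {1..n}) \<le> card (set (stake t' \<omega>) \<inter> {1..n})"
      by (intro card_mono) auto
    with \<open>P t\<close> show "P t'" unfolding P_def by simp
  qed
  have T2eq: "T2 n \<omega> = (if \<exists>t. P t then enat (LEAST t. P t) else \<infinity>)"
    unfolding T2_def P_def by simp
  show ?thesis
  proof (cases "P k")
    case True
    then have "(LEAST t. P t) \<le> k" by (rule Least_le)
    then show ?thesis using True unfolding T2eq P_def by auto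
  next
    case False
    have "k < (LEAST t. P t)" if "\<exists>t. P t"
    proof (rule ccontr)
      assume "\<not> k < (LEAST t. P t)"
      moreover have "P (LEAST t. P t)" using that by (rule LeastI_ex)
      ultimately have "P k" using mono[of "LEAST t. P t" k] by linarith
      with False show False by simp
    qed
    then show ?thesis using False unfolding T2eq P_def by auto
  qed
qed


lemma indicator_identity:
  fixes X :: "nat set"
  assumes "finite X"
  shows "(if card (X \<inter> {1..n}) \<le> 1 then 1 else 0 :: real)
    = (if X \<subseteq> - {1..n} then 1 else 0) + (\<Sum>j\<in>{1..n}. (if X \<subseteq> - ({1..n} - {j}) then 1 else 0) - (if X \<subseteq> - {1..n} then 1 else 0))"
proof -
  let ?Y = "X \<inter> {1..n}"
  have sub1: "X \<subseteq> - ({1..n} - {j}) \<longleftrightarrow> ?Y \<subseteq> {j}" for j by auto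
  have sub0: "X \<subseteq> - {1..n} \<longleftrightarrow> ?Y = {}" by auto
  have fY: "finite ?Y" using assms by simp
  consider "?Y = {}" | j0 where "?Y = {j0}" | "card ?Y \<ge> 2"
  proof -
    assume a1: "?Y = {} \<Longrightarrow> thesis" and a2: "\<And>j0. ?Y = {j0} \<Longrightarrow> thesis" and a3: "card ?Y \<ge> 2 \<Longrightarrow> thesis"
    show thesis
    proof (cases "card ?Y")
      case 0 then show ?thesis using fY a1 by simp
    next
      case (Suc m)
      show ?thesis
      proof (cases m)
        case 0 then show ?thesis using Suc a2 card_1_singleton_iff[of ?Y] by auto
      next
        case (Suc m') then show ?thesis using \<open>card ?Y = Suc m\<close> a3 by simp
      qed
    qed
  qed
  then show ?thesis
  proof cases
    case 1
    then show ?thesis by (simp only: sub0 sub1 1) simp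
  next
    case 2
    then have j0: "j0 \<in> {1..n}" by auto
    have "(\<Sum>j\<in>{1..n}. (if ?Y \<subseteq> {j} then 1 else 0) - (if ?Y = {} then 1 else 0) :: real)
        = (\<Sum>j\<in>{1..n}. if j = j0 then 1 else 0)"
      using 2 by (intro sum.cong) auto
    also have "\<dots> = 1" using j0 by simp
    finally show ?thesis using 2 by (simp only: sub0 sub1) simp
  next
    case 3
    have "\<not> ?Y \<subseteq> {j}" for j
    proof
      assume "?Y \<subseteq> {j}"
      then have "card ?Y \<le> 1" using card_mono[of "{j}" ?Y] by simp
      with 3 show False by simp
    qed
    moreover have "?Y \<noteq> {}" using 3 by auto
    ultimately show ?thesis using 3 by (simp only: sub0 sub1) simp
  qed
qed




lemma tail_formula:
  fixes q :: "nat \<Rightarrow> real"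
  assumes nn: "\<forall>i\<in>{1..n}. 0 \<le> q i" and s: "(\<Sum>i=1..n. q i) \<le> 1"
  shows "T2_tail n q k = (1 - (\<Sum>i=1..n. q i))^k
     + (\<Sum>j\<in>{1..n}. (1 - (\<Sum>i=1..n. q i) + q j)^k - (1 - (\<Sum>i=1..n. q i))^k)"
proof -
  define M where "M = measure_pmf (coupon_pmf n q)"
  define S where "S = stream_space M"
  interpret S: prob_space S unfolding S_def M_def
    by (rule prob_space.prob_space_stream_space[OF measure_pmf.prob_space_axioms])
  define F where "F B = {\<omega>\<in>space S. \<forall>i<k. \<omega> !! i \<in> B}" for B
  have Fs: "F B \<in> sets S" for B unfolding F_def S_def M_def by (rule meas_set)
  have PF: "measure S (F (- T)) = (1 - sum q T)^k" if "T \<subseteq> {1..n}" for T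
    unfolding F_def S_def M_def stream_all_in_measure prob_compl[OF nn s that] ..
  define E where "E = {\<omega>\<in>space S. T2 n \<omega> > enat k}"
  have sp: "space S = UNIV" unfolding S_def M_def by (simp add: space_stream_space)
  have ind: "(indicator E \<omega> :: real) = indicator (F (-{1..n})) \<omega>
      + (\<Sum>j\<in>{1..n}. indicator (F (-({1..n}-{j}))) \<omega> - indicator (F (-{1..n})) \<omega>)" for \<omega> :: "nat stream"
  proof -
    have "indicator E \<omega> = (if card (set (stake k \<omega>) \<inter> {1..n}) \<le> 1 then 1 else 0 :: real)"
      unfolding E_def sp by (simp add: T2_gt_iff indicator_def)
    also have "\<dots> = (if set (stake k \<omega>) \<subseteq> - {1..n} then 1 else 0) + (\<Sum>j\<in>{1..n}. (if set (stake k \<omega>) \<subseteq> - ({1..n} - {j}) then 1 else 0) - (if set (stake k \<omega>) \<subseteq> - {1..n} then 1 else 0))"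
      by (rule indicator_identity) simp
    also have "\<dots> = indicator (F (-{1..n})) \<omega>
      + (\<Sum>j\<in>{1..n}. indicator (F (-({1..n}-{j}))) \<omega> - indicator (F (-{1..n})) \<omega>)"
      unfolding F_def sp by (simp only: indicator_def all_less_iff_set mem_Collect_eq UNIV_I simp_thms of_bool_def)
    finally show ?thesis .
  qed
  have ind': "indicator E = (\<lambda>\<omega>. indicator (F (-{1..n})) \<omega>
      + (\<Sum>j\<in>{1..n}. indicator (F (-({1..n}-{j}))) \<omega> - indicator (F (-{1..n})) \<omega>) :: real)"
    by (rule ext) (rule ind)
  have int: "integrable S (indicator (F B) :: _ \<Rightarrow> real)" for B
    by (rule integrable_real_indicator[OF Fs]) (simp add: less_top[symmetric])
  have "T2_tail n q k = measure S E" unfolding T2_tail_def S_def M_def E_def ..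
  also have "\<dots> = integral\<^sup>L S (indicator E)" by (simp add: sp)
  also have "\<dots> = measure S (F (-{1..n})) + (\<Sum>j\<in>{1..n}. measure S (F (-({1..n}-{j}))) - measure S (F (-{1..n})))"
    unfolding ind' by (simp add: int integral_sum integral_indicator sp)
  also have "\<dots> = (1 - (\<Sum>i=1..n. q i))^k
     + (\<Sum>j\<in>{1..n}. (1 - (\<Sum>i=1..n. q i) + q j)^k - (1 - (\<Sum>i=1..n. q i))^k)"
  proof -
    have "measure S (F (-({1..n}-{j}))) = (1 - (\<Sum>i=1..n. q i) + q j)^k" if "j \<in> {1..n}" for j
      using PF[of "{1..n}-{j}"] that by (simp add: sum_diff1 algebra_simps)
    then show ?thesis using PF[of "{1..n}"] by (auto intro!: sum.cong)
  qed
  finally show ?thesis .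
qed




lemma convex_pow_nonneg: "convex_on {0::real..} (\<lambda>x. x ^ k)"
proof (cases "even k")
  case True
  then show ?thesis using convex_on_subset[OF convex_power_even[OF True]] by blast
next
  case False
  then show ?thesis using convex_power_odd by blast
qed

lemma jensen_pow:
  fixes x :: "nat \<Rightarrow> real"
  assumes n: "n > 0" and nn: "\<forall>i\<in>{1..n}. 0 \<le> x i"
  shows "real n * ((\<Sum>i=1..n. x i) / real n) ^ k \<le> (\<Sum>i=1..n. x i ^ k)"
proof -
  have "(\<lambda>x. x ^ k) (\<Sum>i\<in>{1..n}. (1 / real n) *\<^sub>R x i) \<le> (\<Sum>i\<in>{1..n}. (1 / real n) * (\<lambda>x. x ^ k) (x i))"
    by (rule convex_on_sum[OF _ _ convex_pow_nonneg]) (use n nn in auto)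
  moreover have "(\<Sum>i\<in>{1..n}. (1 / real n) *\<^sub>R x i) = (\<Sum>i=1..n. x i) / real n"
    by (simp add: sum_divide_distrib)
  moreover have "(\<Sum>i\<in>{1..n}. (1 / real n) * x i ^ k) = (\<Sum>i=1..n. x i ^ k) / real n"
    by (simp add: sum_divide_distrib)
  ultimately have "((\<Sum>i=1..n. x i) / real n) ^ k \<le> (\<Sum>i=1..n. x i ^ k) / real n" by simp
  then show ?thesis using n by (simp add: field_simps)
qed

lemma ineq2:
  fixes a :: real
  assumes a0: "0 \<le> a" and a1: "a \<le> 1" and n: "real n \<ge> 1"
  shows "0 ^ k + real n * ((1 / real n) ^ k - 0 ^ k) \<le> a ^ k + real n * ((a + (1 - a) / real n) ^ k - a ^ k)"
proof (cases k)
  case 0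
  then show ?thesis by simp
next
  case (Suc m)
  define c where "c = 1 / real n"
  define b where "b = a + (1 - a) / real n"
  have c0: "0 \<le> c" unfolding c_def using n by simp
  have bc: "b - c = a * (1 - c)" unfolding b_def c_def using n by (simp add: field_simps)
  have c1: "c \<le> 1" unfolding c_def using n by simp
  have "0 \<le> a * (1 - c)" using a0 c1 by simp
  then have cb: "c \<le> b" using bc by linarith
  have ab: "a \<le> b" unfolding b_def using a1 n by simp
  have "b ^ Suc m - c ^ Suc m = (b - c) * b ^ m + c * (b ^ m - c ^ m)" by (simp add: algebra_simps)
  also have "\<dots> \<ge> (b - c) * b ^ m" using power_mono[OF cb c0, of m] c0 by (simp add: mult_nonneg_nonneg)
  finally have "b ^ Suc m - c ^ Suc m \<ge> (b - c) * b ^ m" .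
  moreover have "(b - c) * b ^ m \<ge> (b - c) * a ^ m"
    using power_mono[OF ab a0, of m] cb by (simp add: mult_left_mono)
  ultimately have "b ^ Suc m - c ^ Suc m \<ge> a * (1 - c) * a ^ m" using bc by simp
  then have "real n * (b ^ Suc m - c ^ Suc m) \<ge> real n * (a * (1 - c) * a ^ m)"
    using n by (simp add: mult_left_mono)
  moreover have "real n * (a * (1 - c) * a ^ m) = (real n - 1) * a ^ Suc m"
    unfolding c_def using n by (simp add: field_simps)
  ultimately have "real n * (b ^ Suc m - c ^ Suc m) \<ge> (real n - 1) * a ^ Suc m" by simp
  then show ?thesis unfolding Suc b_def[symmetric] c_def[symmetric] by (simp add: algebra_simps)
qed

theorem theorem5:
  fixes n :: nat and p :: "nat \<Rightarrow> real" and k :: nat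
  assumes "n \<ge> 2"
    and "\<forall>i\<in>{1..n}. 0 < p i \<and> p i < 1"
    and "(\<Sum>i=1..n. p i) \<le> 1"
  shows "T2_tail n p k \<ge> T2_tail n (\<lambda>i. (1 - (1 - (\<Sum>j=1..n. p j))) / real n) k
       \<and> T2_tail n (\<lambda>i. (1 - (1 - (\<Sum>j=1..n. p j))) / real n) k \<ge> T2_tail n (\<lambda>i. 1 / real n) k"
proof -
  define s where "s = (\<Sum>j=1..n. p j)"
  define a where "a = 1 - s"
  have n0: "n > 0" and n1: "real n \<ge> 1" using assms(1) by auto
  have pnn: "\<forall>i\<in>{1..n}. 0 \<le> p i" using assms(2) by auto
  have s0: "0 \<le> s" unfolding s_def using pnn by (intro sum_nonneg) auto
  have s1: "s \<le> 1" unfolding s_def using assms(3) .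
  have vq: "(\<lambda>i. (1 - (1 - (\<Sum>j=1..n. p j))) / real n) = (\<lambda>i. s / real n)" unfolding s_def by simp
  have sv: "(\<Sum>i=1..n. s / real n) = s" using n0 by simp
  have su: "(\<Sum>i=1..n. 1 / real n) = 1" using n0 by simp
  have Tp: "T2_tail n p k = a ^ k + (\<Sum>j\<in>{1..n}. (a + p j)^k - a^k)"
    using tail_formula[OF pnn assms(3), of k] unfolding a_def s_def .
  have Tv: "T2_tail n (\<lambda>i. s / real n) k = a ^ k + real n * ((a + s / real n)^k - a^k)"
    using tail_formula[of n "\<lambda>i. s / real n" k] s0 s1 unfolding sv a_def by simp
  have Tu: "T2_tail n (\<lambda>i. 1 / real n) k = 0 ^ k + real n * ((1 / real n)^k - 0^k)"
    using tail_formula[of n "\<lambda>i. 1 / real n" k] unfolding su by simp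
  have J: "real n * ((\<Sum>i=1..n. a + p i) / real n) ^ k \<le> (\<Sum>i=1..n. (a + p i) ^ k)"
    by (rule jensen_pow[OF n0]) (use pnn s1 in \<open>auto simp: a_def\<close>)
  have "(\<Sum>i=1..n. a + p i) / real n = a + s / real n"
    unfolding s_def using n0 by (simp add: sum.distrib field_simps)
  then have J2: "real n * (a + s / real n) ^ k \<le> (\<Sum>i=1..n. (a + p i) ^ k)" using J by simp
  have first: "T2_tail n (\<lambda>i. s / real n) k \<le> T2_tail n p k"
    unfolding Tp Tv using J2 by (simp add: sum_subtractf algebra_simps)
  have "a + (1 - a) / real n = a + s / real n" unfolding a_def by simp
  then have second: "T2_tail n (\<lambda>i. 1 / real n) k \<le> T2_tail n (\<lambda>i. s / real n) k"
    unfolding Tu Tv using ineq2[of a n k] s0 s1 n1 unfolding a_def by simp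
  show ?thesis unfolding vq using first second by simp
qed


end
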